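(* Let $K$ be a non-pluripolar compact subset of $\mathbb{C}^n$. Then for every index $i\ge 0$, $$\inf\{\|P\|_K : P\in\mathcal P(\alpha(i))\} \;\ge\; [\tau^{-}(K)]^{|\alpha(i)|}.$$ In particular, every unweighted Chebyshev polynomial $T$ for $K$ in $\mathcal P(\alpha(i))$, i.e. every minimizer of $\|P\|_K$ over $P\in\mathcal P(\alpha(i))$, satisfies $\|T\|_K\ge[\tau^{-}(K)]^{|\alpha(i)|}$.
   Context: Monomials $z^\alpha=z_1^{\alpha_1}\cdots z_n^{\alpha_n}$, $\alpha\in\mathbb N_0^n$, are enumerated as $e_0=1,e_1,e_2,\dots$ with $e_i=z^{\alpha(i)}$. The enumeration is such that $|\alpha(i)|=\alpha_1+\dots+\alpha_n$ is non-decreasing in $i$. Among multi-indices of equal length it is ordered lexicographically: for $|\alpha|=|\beta|$, $\beta\prec\alpha$ iff for some $l$ one has $\alpha_l<\beta_l$ and $\alpha_k=\beta_k$ for all $k<l$. $\mathcal P(\alpha(i))$ denotes the set of polynomials of the form $e_i+\sum_{j<i}c_je_j$ with $c_j\in\mathbb C$. For compact $K\subset\mathbb C^n$, $\|\cdot\|_K$ denotes the sup norm on $K$. Set $t_i(K)=\inf\{\|P\|_K:P\in\mathcal P(\alpha(i))\}$ and $\tau^-(K)=\liminf_{i\to\infty} t_i(K)^{1/|\alpha(i)|}$. A compact set is non-pluripolar if it is not contained in the $-\infty$ locus of a plurisubharmonic function that is not identically $-\infty$ on a connected open neighborhood. *)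

theory Defs
  imports "HOL-Analysis.Analysis" "HOL-Library.Extended_Nonnegative_Real"
begin

text \<open>Points of C^n are elements of complex^'n; the coordinates are indexed by a
finite linearly ordered type 'n (the order of the coordinates z_1,...,z_n).
Multi-indices are functions 'n => nat.\<close>

definition mdeg :: "('n::finite \<Rightarrow> nat) \<Rightarrow> nat" where
  "mdeg a = (\<Sum>k\<in>UNIV. a k)"

definition grlex_less :: "('n::{finite,linorder} \<Rightarrow> nat) \<Rightarrow> ('n \<Rightarrow> nat) \<Rightarrow> bool" where
  "grlex_less b a \<longleftrightarrow> mdeg b < mdeg a \<or>
     (mdeg b = mdeg a \<and> (\<exists>l. a l < b l \<and> (\<forall>k<l. a k = b k)))"

definition mindex :: "nat \<Rightarrow> ('n::{finite,linorder} \<Rightarrow> nat)" where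
  "mindex i = (THE a. card {b. grlex_less b a} = i)"

definition monomial :: "('n::finite \<Rightarrow> nat) \<Rightarrow> complex^'n \<Rightarrow> complex" where
  "monomial a z = (\<Prod>k\<in>UNIV. (z $ k) ^ (a k))"

definition monic_class :: "nat \<Rightarrow> (complex^'n::{finite,linorder} \<Rightarrow> complex) set" where
  "monic_class i = {p. \<exists>c::nat \<Rightarrow> complex.
      p = (\<lambda>z. monomial (mindex i) z + (\<Sum>j<i. c j * monomial (mindex j) z))}"

definition supnorm :: "'a set \<Rightarrow> ('a \<Rightarrow> complex) \<Rightarrow> real" where
  "supnorm K p = Sup ((\<lambda>z. cmod (p z)) ` K)"

definition cheb_const :: "(complex^'n::{finite,linorder}) set \<Rightarrow> nat \<Rightarrow> real" where
  "cheb_const K i = Inf (supnorm K ` monic_class i)"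

definition tau_minus :: "(complex^'n::{finite,linorder}) set \<Rightarrow> ereal" where
  "tau_minus K = liminf (\<lambda>i. ereal (cheb_const K i powr (1 / real (mdeg (mindex i :: 'n \<Rightarrow> nat)))))"

definition circle_mean :: "('a \<Rightarrow> ereal) \<Rightarrow> (real \<Rightarrow> 'a) \<Rightarrow> ereal" where
  "circle_mean f \<gamma> =
     (enn2ereal (\<integral>\<^sup>+\<theta>\<in>{0..2*pi}. e2ennreal (f (\<gamma> \<theta>)) \<partial>lborel)
      - enn2ereal (\<integral>\<^sup>+\<theta>\<in>{0..2*pi}. e2ennreal (- f (\<gamma> \<theta>)) \<partial>lborel)) / ereal (2*pi)"

text \<open>u : Omega -> [-inf, inf) is plurisubharmonic on the open set Omega: upper
semicontinuous, and its restriction to every complex line is subharmonic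
(sub-mean-value property on every closed disc contained in Omega).\<close>
definition psh_on :: "(complex^'n \<Rightarrow> ereal) \<Rightarrow> (complex^'n) set \<Rightarrow> bool" where
  "psh_on u \<Omega> \<longleftrightarrow> open \<Omega> \<and> (\<forall>x\<in>\<Omega>. u x \<noteq> \<infinity>) \<and>
     (\<forall>x\<in>\<Omega>. \<forall>c. u x < c \<longrightarrow> (\<forall>\<^sub>F y in at x. u y < c)) \<and>
     (\<forall>a\<in>\<Omega>. \<forall>b. (\<forall>\<zeta>. cmod \<zeta> \<le> 1 \<longrightarrow> a + \<zeta> *s b \<in> \<Omega>) \<longrightarrow>
          u a \<le> circle_mean u (\<lambda>\<theta>. a + cis \<theta> *s b))"

definition pluripolar :: "(complex^'n) set \<Rightarrow> bool" where
  "pluripolar E \<longleftrightarrow> (\<exists>\<Omega> u. open \<Omega> \<and> connected \<Omega> \<and> E \<subseteq> \<Omega> \<and> psh_on u \<Omega> \<and>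
      (\<exists>x\<in>\<Omega>. u x \<noteq> -\<infinity>) \<and> (\<forall>z\<in>E. u z = -\<infinity>))"

end

theory Submission
  imports Defs
begin

abbreviation pred :: "('n::{finite,linorder} \<Rightarrow> nat) \<Rightarrow> ('n \<Rightarrow> nat) set" where
  "pred a \<equiv> {b. grlex_less b a}"

abbreviation rk :: "('n::{finite,linorder} \<Rightarrow> nat) \<Rightarrow> nat" where
  "rk a \<equiv> card (pred a)"

lemma mdeg_add: "mdeg (\<lambda>k. a k + b k) = mdeg a + mdeg b"
  by (simp add: mdeg_def sum.distrib)

lemma mdeg_mult: "mdeg (\<lambda>k. c * a k) = c * mdeg a"
  by (simp add: mdeg_def sum_distrib_left)

lemma le_mdeg: "a k \<le> mdeg a"
  unfolding mdeg_def by (rule member_le_sum) auto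

lemma grlex_irrefl: "\<not> grlex_less a a"
  by (auto simp: grlex_less_def)

lemma grlex_deg: "grlex_less b a \<Longrightarrow> mdeg b \<le> mdeg a"
  unfolding grlex_less_def by (elim disjE) simp_all

lemma grlex_trans:
  assumes cb: "grlex_less c b" and ba: "grlex_less b a" shows "grlex_less c a"
proof (cases "mdeg c = mdeg b \<and> mdeg b = mdeg a")
  case False
  with grlex_deg[OF cb] grlex_deg[OF ba] have "mdeg c < mdeg a" by linarith
  thus ?thesis unfolding grlex_less_def by blast
next
  case eq: True
  from ba eq obtain l1 where l1: "a l1 < b l1" "\<forall>k<l1. a k = b k"
    unfolding grlex_less_def by auto
  from cb eq obtain l2 where l2: "b l2 < c l2" "\<forall>k<l2. b k = c k"
    unfolding grlex_less_def by auto
  have "\<exists>l. a l < c l \<and> (\<forall>k<l. a k = c k)"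
  proof (cases l1 l2 rule: linorder_cases)
    case less then show ?thesis using l1 l2 by (intro exI[of _ l1]) auto
  next
    case equal then show ?thesis using l1 l2 by (intro exI[of _ l1]) auto
  next
    case greater then show ?thesis using l1 l2 by (intro exI[of _ l2]) auto
  qed
  thus ?thesis using eq unfolding grlex_less_def by simp
qed

lemma grlex_total:
  assumes "a \<noteq> b" shows "grlex_less a b \<or> grlex_less b a"
proof (cases "mdeg a = mdeg b")
  case True
  from assms obtain k where "a k \<noteq> b k" by auto
  define l where "l = Min {k. a k \<noteq> b k}"
  have l: "a l \<noteq> b l" using \<open>a k \<noteq> b k\<close> unfolding l_def
    by (metis (mono_tags) Min_in empty_iff finite mem_Collect_eq)
  have "\<forall>k<l. a k = b k" unfolding l_def
    by (metis (mono_tags) Min_le finite leD mem_Collect_eq)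
  then show ?thesis using True l unfolding grlex_less_def
    by (metis linorder_neq_iff)
next
  case False then show ?thesis by (auto simp: grlex_less_def)
qed

lemma grlex_add:
  assumes "grlex_less b a" shows "grlex_less (\<lambda>k. b k + c k) (\<lambda>k. a k + c k)"
  using assms unfolding grlex_less_def mdeg_add by auto

lemma grlex_add2:
  assumes "grlex_less b a" shows "grlex_less (\<lambda>k. c k + b k) (\<lambda>k. c k + a k)"
  using grlex_add[OF assms, of c] by (simp add: add.commute)

lemma finite_pred: "finite (pred (a::'n::{finite,linorder} \<Rightarrow> nat))"
proof -
  have "pred a \<subseteq> (\<Pi>\<^sub>E k\<in>UNIV. {..mdeg a})"
  proof
    fix b assume "b \<in> pred a"
    hence "mdeg b \<le> mdeg a" by (auto simp: grlex_less_def)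
    thus "b \<in> (\<Pi>\<^sub>E k\<in>UNIV. {..mdeg a})" using le_mdeg[of b] by (auto intro: le_trans)
  qed
  moreover have "finite (\<Pi>\<^sub>E k\<in>(UNIV::'n set). {..mdeg a})" by (rule finite_PiE) auto
  ultimately show ?thesis by (rule finite_subset)
qed

lemma rk_mono: "grlex_less b a \<Longrightarrow> rk b < rk a"
  apply (rule psubset_card_mono[OF finite_pred])
  using grlex_trans grlex_irrefl by blast

lemma rk_less_iff: "rk b < rk a \<longleftrightarrow> grlex_less b a"
  by (metis grlex_total rk_mono less_asym less_irrefl)

lemma rk_inj: "inj rk"
proof (rule injI)
  fix a b :: "'n::{finite,linorder} \<Rightarrow> nat"
  assume "rk a = rk b"
  thus "a = b" using grlex_total[of a b] rk_mono[of a b] rk_mono[of b a] by auto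
qed

lemma rk_pred: "rk ` pred a = {..<rk a}"
proof -
  have "rk ` pred a \<subseteq> {..<rk a}" using rk_mono by auto
  moreover have "card (rk ` pred a) = card {..<rk a}"
    using card_image[OF inj_on_subset[OF rk_inj]] by auto
  ultimately show ?thesis by (intro card_subset_eq) auto
qed

lemma infinite_multi: "infinite (UNIV :: ('n::{finite,linorder} \<Rightarrow> nat) set)"
proof
  assume "finite (UNIV :: ('n \<Rightarrow> nat) set)"
  moreover have "inj (\<lambda>m::nat. (\<lambda>k::'n. m))" by (auto simp: inj_def fun_eq_iff)
  ultimately show False
    using finite_imageD[of "\<lambda>m::nat. (\<lambda>k::'n. m)" UNIV] finite_subset by (metis infinite_UNIV_nat subset_UNIV)
qed

lemma rk_surj: "\<exists>a::'n::{finite,linorder} \<Rightarrow> nat. rk a = i"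
proof -
  have "infinite (range (rk :: ('n \<Rightarrow> nat) \<Rightarrow> nat))"
    using finite_imageD[OF _ rk_inj] infinite_multi by blast
  then obtain a :: "'n \<Rightarrow> nat" where "rk a > i"
  proof -
    have "\<not> range (rk :: ('n \<Rightarrow> nat) \<Rightarrow> nat) \<subseteq> {..i}"
      using \<open>infinite (range rk)\<close> finite_subset by blast
    then obtain a :: "'n \<Rightarrow> nat" where "\<not> rk a \<le> i" by auto
    thus ?thesis using that by (simp add: not_le)
  qed
  hence "i \<in> rk ` pred a" using rk_pred by auto
  thus ?thesis by auto
qed

lemma rk_mindex: "rk (mindex i :: 'n::{finite,linorder} \<Rightarrow> nat) = i"
proof -
  have "\<exists>!a::'n \<Rightarrow> nat. rk a = i" using rk_surj rk_inj by (metis injD)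
  thus ?thesis unfolding mindex_def by (rule theI')
qed

lemma mindex_rk: "mindex (rk a) = a"
  using rk_inj rk_mindex by (metis injD)

section \<open>Polynomial classes\<close>

definition Lc :: "('n::{finite,linorder} \<Rightarrow> nat) \<Rightarrow> (complex^'n::{finite,linorder} \<Rightarrow> complex) set" where
  "Lc a = {p. \<exists>c. p = (\<lambda>z. \<Sum>b\<in>pred a. c b * monomial b z)}"

definition Mc :: "('n::{finite,linorder} \<Rightarrow> nat) \<Rightarrow> (complex^'n::{finite,linorder} \<Rightarrow> complex) set" where
  "Mc a = {p. \<exists>q\<in>Lc a. p = (\<lambda>z. monomial a z + q z)}"

lemma Lc_zero: "(\<lambda>z. 0) \<in> Lc a"
  unfolding Lc_def by (rule CollectI, rule exI[of _ "\<lambda>_. 0"]) simp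

lemma Lc_add: "p \<in> Lc a \<Longrightarrow> q \<in> Lc a \<Longrightarrow> (\<lambda>z. p z + q z) \<in> Lc a"
proof -
  assume "p \<in> Lc a" "q \<in> Lc a"
  then obtain c d where "p = (\<lambda>z. \<Sum>b\<in>pred a. c b * monomial b z)"
    "q = (\<lambda>z. \<Sum>b\<in>pred a. d b * monomial b z)" unfolding Lc_def by auto
  hence eq: "(\<lambda>z. p z + q z) = (\<lambda>z. \<Sum>b\<in>pred a. (c b + d b) * monomial b z)"
    by (simp add: distrib_right sum.distrib)
  show ?thesis unfolding Lc_def by (rule CollectI, rule exI[of _ "\<lambda>b. c b + d b"]) (simp add: eq)
qed

lemma Lc_single: "grlex_less b a \<Longrightarrow> (\<lambda>z. k * monomial b z) \<in> Lc a"
  unfolding Lc_def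
proof (rule CollectI, rule exI[of _ "\<lambda>x. if x = b then k else 0"])
  assume "grlex_less b a"
  hence "b \<in> pred a" by simp
  moreover have "finite (pred a)" by (rule finite_pred)
  ultimately have "(\<Sum>x\<in>pred a. (if x = b then k else 0) * monomial x z) = k * monomial b z" for z
  proof -
    have "(\<Sum>x\<in>pred a. (if x = b then k else 0) * monomial x z) = (\<Sum>x\<in>pred a. if x = b then k * monomial x z else 0)"
      by (rule sum.cong) auto
    also have "\<dots> = k * monomial b z" using \<open>b \<in> pred a\<close> finite_pred[of a] by (simp add: sum.delta)
    finally show ?thesis .
  qed
  thus "(\<lambda>z. k * monomial b z) = (\<lambda>z. \<Sum>x\<in>pred a. (if x = b then k else 0) * monomial x z)"
    by simp
qed

lemma Lc_sum: "finite F \<Longrightarrow> (\<forall>x\<in>F. g x \<in> Lc a) \<Longrightarrow> (\<lambda>z. \<Sum>x\<in>F. g x z) \<in> Lc a"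
proof (induction F rule: finite_induct)
  case empty then show ?case using Lc_zero by simp
next
  case (insert x F)
  then show ?case using Lc_add[of "g x" a "\<lambda>z. \<Sum>x\<in>F. g x z"] by simp
qed

lemma monomial_add: "monomial (\<lambda>k. a k + b k) z = monomial a z * monomial b z"
  unfolding monomial_def by (simp add: power_add prod.distrib)

lemma Lc_mono_mult: "q \<in> Lc b \<Longrightarrow> (\<lambda>z. monomial a z * q z) \<in> Lc (\<lambda>k. a k + b k)"
proof -
  assume "q \<in> Lc b"
  then obtain c where q: "q = (\<lambda>z. \<Sum>x\<in>pred b. c x * monomial x z)" unfolding Lc_def by auto
  have "(\<lambda>z. \<Sum>x\<in>pred b. c x * monomial (\<lambda>k. a k + x k) z) \<in> Lc (\<lambda>k. a k + b k)"
    by (rule Lc_sum[OF finite_pred]) (auto intro: Lc_single grlex_add2)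
  moreover have "(\<lambda>z. monomial a z * q z) = (\<lambda>z. \<Sum>x\<in>pred b. c x * monomial (\<lambda>k. a k + x k) z)"
    unfolding q by (simp add: monomial_add sum_distrib_left mult.left_commute)
  ultimately show ?thesis by simp
qed

lemma Lc_mult_mono: "q \<in> Lc a \<Longrightarrow> (\<lambda>z. q z * monomial b z) \<in> Lc (\<lambda>k. a k + b k)"
proof -
  assume "q \<in> Lc a"
  then obtain c where q: "q = (\<lambda>z. \<Sum>x\<in>pred a. c x * monomial x z)" unfolding Lc_def by auto
  have "(\<lambda>z. \<Sum>x\<in>pred a. c x * monomial (\<lambda>k. x k + b k) z) \<in> Lc (\<lambda>k. a k + b k)"
    by (rule Lc_sum[OF finite_pred]) (auto intro: Lc_single grlex_add)
  moreover have "(\<lambda>z. q z * monomial b z) = (\<lambda>z. \<Sum>x\<in>pred a. c x * monomial (\<lambda>k. x k + b k) z)"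
    unfolding q by (simp add: monomial_add sum_distrib_right mult.assoc)
  ultimately show ?thesis by simp
qed

lemma Lc_mult: "q \<in> Lc a \<Longrightarrow> r \<in> Lc b \<Longrightarrow> (\<lambda>z. q z * r z) \<in> Lc (\<lambda>k. a k + b k)"
proof -
  assume "q \<in> Lc a" "r \<in> Lc b"
  then obtain c d where q: "q = (\<lambda>z. \<Sum>x\<in>pred a. c x * monomial x z)"
    and r: "r = (\<lambda>z. \<Sum>y\<in>pred b. d y * monomial y z)" unfolding Lc_def by auto
  have "(\<lambda>z. \<Sum>x\<in>pred a. \<Sum>y\<in>pred b. (c x * d y) * monomial (\<lambda>k. x k + y k) z) \<in> Lc (\<lambda>k. a k + b k)"
  proof (rule Lc_sum[OF finite_pred], intro ballI)
    fix x assume x: "x \<in> pred a"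
    show "(\<lambda>z. \<Sum>y\<in>pred b. (c x * d y) * monomial (\<lambda>k. x k + y k) z) \<in> Lc (\<lambda>k. a k + b k)"
    proof (rule Lc_sum[OF finite_pred], intro ballI)
      fix y assume y: "y \<in> pred b"
      have "grlex_less (\<lambda>k. x k + y k) (\<lambda>k. a k + y k)" using x grlex_add by auto
      moreover have "grlex_less (\<lambda>k. a k + y k) (\<lambda>k. a k + b k)" using y grlex_add2 by auto
      ultimately show "(\<lambda>z. (c x * d y) * monomial (\<lambda>k. x k + y k) z) \<in> Lc (\<lambda>k. a k + b k)"
        by (intro Lc_single) (rule grlex_trans)
    qed
  qed
  thus ?thesis unfolding q r
    by (simp add: monomial_add sum_product algebra_simps)
qed

lemma Mc_mult: "p \<in> Mc a \<Longrightarrow> p' \<in> Mc b \<Longrightarrow> (\<lambda>z. p z * p' z) \<in> Mc (\<lambda>k. a k + b k)"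
proof -
  assume "p \<in> Mc a" "p' \<in> Mc b"
  then obtain q r where q: "q \<in> Lc a" "p = (\<lambda>z. monomial a z + q z)"
    and r: "r \<in> Lc b" "p' = (\<lambda>z. monomial b z + r z)" unfolding Mc_def by auto
  let ?s = "\<lambda>z. (monomial a z * r z + q z * monomial b z) + q z * r z"
  have "?s \<in> Lc (\<lambda>k. a k + b k)"
    by (intro Lc_add Lc_mono_mult Lc_mult_mono Lc_mult q r)
  moreover have "(\<lambda>z. p z * p' z) = (\<lambda>z. monomial (\<lambda>k. a k + b k) z + ?s z)"
    unfolding q r monomial_add by (simp add: algebra_simps)
  ultimately show ?thesis unfolding Mc_def by (intro CollectI bexI[of _ ?s]) auto
qed

lemma Mc_power: "p \<in> Mc a \<Longrightarrow> (\<lambda>z. p z ^ Suc m) \<in> Mc (\<lambda>k. Suc m * a k)"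
proof (induction m)
  case 0 then show ?case by simp
next
  case (Suc m)
  have "(\<lambda>z. p z ^ Suc m * p z) \<in> Mc (\<lambda>k. Suc m * a k + a k)"
    using Mc_mult[OF Suc.IH[OF Suc.prems] Suc.prems] .
  thus ?case by (simp add: algebra_simps)
qed

lemma class_Mc:
  fixes p :: "complex^'n::{finite,linorder} \<Rightarrow> complex"
  assumes "p \<in> monic_class i" shows "p \<in> Mc (mindex i)"
proof -
  from assms obtain c where p: "p = (\<lambda>z. monomial (mindex i) z + (\<Sum>j<i. c j * monomial (mindex j) z))"
    unfolding monic_class_def by auto
  have L: "(\<lambda>z. \<Sum>j<i. c j * monomial (mindex j) z) \<in> Lc (mindex i :: 'n \<Rightarrow> nat)"
  proof (rule Lc_sum)
    show "\<forall>x\<in>{..<i}. (\<lambda>z. c x * monomial (mindex x) z) \<in> Lc (mindex i :: 'n \<Rightarrow> nat)"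
    proof
      fix x assume x: "x \<in> {..<i}"
      have "grlex_less (mindex x) (mindex i :: 'n \<Rightarrow> nat)"
        using x rk_less_iff[of "mindex x" "mindex i :: 'n \<Rightarrow> nat"] by (simp add: rk_mindex)
      thus "(\<lambda>z. c x * monomial (mindex x) z) \<in> Lc (mindex i :: 'n \<Rightarrow> nat)" by (rule Lc_single)
    qed
  qed simp
  show ?thesis unfolding Mc_def p by (rule CollectI, rule bexI[OF _ L]) simp
qed

lemma Mc_class:
  fixes p :: "complex^'n::{finite,linorder} \<Rightarrow> complex"
  assumes "p \<in> Mc a" shows "p \<in> monic_class (rk a)"
proof -
  from assms obtain c where p: "p = (\<lambda>z. monomial a z + (\<Sum>x\<in>pred a. c x * monomial x z))"
    unfolding Mc_def Lc_def by auto
  have "mindex ` {..<rk a} = mindex ` rk ` pred a" using rk_pred[of a] by simp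
  also have "\<dots> = pred a" by (simp add: image_image mindex_rk)
  finally have pr: "pred a = mindex ` {..<rk a}" by simp
  have inj: "inj_on (mindex :: nat \<Rightarrow> 'n \<Rightarrow> nat) {..<rk a}"
  proof (rule inj_onI)
    fix x y assume "(mindex x :: 'n \<Rightarrow> nat) = mindex y"
    hence "rk (mindex x :: 'n \<Rightarrow> nat) = rk (mindex y :: 'n \<Rightarrow> nat)" by simp
    thus "x = y" by (simp add: rk_mindex)
  qed
  have "(\<Sum>x\<in>pred a. c x * monomial x z) = (\<Sum>j<rk a. c (mindex j) * monomial (mindex j) z)" for z
  proof -
    have "(\<Sum>j<rk a. c (mindex j) * monomial (mindex j) z) = (\<Sum>x\<in>mindex ` {..<rk a}. c x * monomial x z)"
      by (simp add: sum.reindex[OF inj])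
    thus ?thesis by (simp only: pr[symmetric])
  qed
  hence eq: "p = (\<lambda>z. monomial (mindex (rk a)) z + (\<Sum>j<rk a. (c \<circ> mindex) j * monomial (mindex j) z))"
    unfolding p mindex_rk by simp
  show ?thesis unfolding monic_class_def by (rule CollectI, rule exI[of _ "c \<circ> mindex"]) (rule eq)
qed

lemma monomial_cont: "continuous_on UNIV (monomial a)"
  unfolding monomial_def by (intro continuous_intros)

lemma Lc_cont: "q \<in> Lc a \<Longrightarrow> continuous_on UNIV q"
  unfolding Lc_def using monomial_cont[unfolded monomial_def]
  by (auto simp: monomial_def intro!: continuous_intros)

lemma Mc_cont: "p \<in> Mc a \<Longrightarrow> continuous_on UNIV p"
  unfolding Mc_def using monomial_cont[of a] Lc_cont
  by (auto intro!: continuous_intros)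

lemma class_cont:
  fixes p :: "complex^'n::{finite,linorder} \<Rightarrow> complex"
  shows "p \<in> monic_class i \<Longrightarrow> continuous_on UNIV p"
  using class_Mc Mc_cont by blast

lemma sn_bdd:
  assumes "continuous_on UNIV p" "compact K"
  shows "bdd_above ((\<lambda>z. cmod (p z)) ` K)"
proof -
  have "continuous_on K (\<lambda>z. cmod (p z))"
    using assms(1) by (intro continuous_intros) (auto intro: continuous_on_subset)
  hence "compact ((\<lambda>z. cmod (p z)) ` K)" using assms(2) by (rule compact_continuous_image)
  thus ?thesis by (intro bounded_imp_bdd_above compact_imp_bounded)
qed

lemma sn_nonneg:
  assumes "continuous_on UNIV p" "compact K" "K \<noteq> {}"
  shows "0 \<le> supnorm K p"
proof -
  from assms obtain z where z: "z \<in> K" by auto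
  have "cmod (p z) \<le> supnorm K p"
    unfolding supnorm_def using z sn_bdd[OF assms(1,2)] by (rule cSUP_upper)
  thus ?thesis by (meson norm_ge_zero order_trans)
qed

lemma sn_power:
  assumes "continuous_on UNIV p" "compact K" "K \<noteq> {}"
  shows "supnorm K (\<lambda>z. p z ^ m) \<le> supnorm K p ^ m"
  unfolding supnorm_def
proof (rule cSUP_least[OF assms(3)])
  fix z assume z: "z \<in> K"
  have "cmod (p z) \<le> (SUP z\<in>K. cmod (p z))"
    using z sn_bdd[OF assms(1,2)] by (rule cSUP_upper)
  thus "cmod (p z ^ m) \<le> (SUP z\<in>K. cmod (p z)) ^ m"
    by (simp add: norm_power power_mono)
qed

lemma class_nonempty: "(\<lambda>z. monomial (mindex i) z) \<in> monic_class i"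
  unfolding monic_class_def by (rule CollectI, rule exI[of _ "\<lambda>_. 0"]) simp

lemma cheb_nonneg:
  fixes K :: "(complex^'n::{finite,linorder}) set"
  assumes "compact K" "K \<noteq> {}"
  shows "0 \<le> cheb_const K i"
  unfolding cheb_const_def
proof (rule cInf_greatest)
  show "supnorm K ` monic_class i \<noteq> {}" using class_nonempty by blast
  fix x assume "x \<in> supnorm K ` monic_class i"
  then obtain p where "p \<in> monic_class i" "x = supnorm K p" by auto
  thus "0 \<le> x" using sn_nonneg class_cont assms by blast
qed

lemma cheb_le:
  fixes K :: "(complex^'n::{finite,linorder}) set"
  assumes "compact K" "K \<noteq> {}" "p \<in> monic_class i"
  shows "cheb_const K i \<le> supnorm K p"
  unfolding cheb_const_def
proof (rule cInf_lower)
  show "supnorm K p \<in> supnorm K ` monic_class i" using assms(3) by blast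
  show "bdd_below (supnorm K ` monic_class i)"
    using sn_nonneg class_cont assms(1,2) by (auto intro!: bdd_belowI[of _ 0])
qed

lemma empty_pluripolar: "pluripolar ({} :: (complex^'n) set)"
  unfolding pluripolar_def
proof (intro exI[of _ UNIV] exI[of _ "\<lambda>_. 0"] conjI)
  show "psh_on (\<lambda>_. 0) (UNIV :: (complex^'n) set)"
    unfolding psh_on_def circle_mean_def by simp
qed auto

lemma pred_zero: "\<not> grlex_less b (\<lambda>_. 0 :: nat)"
proof
  assume b: "grlex_less b (\<lambda>_. 0 :: nat)"
  have m0: "mdeg (\<lambda>_::'a. 0::nat) = 0" by (simp add: mdeg_def)
  from b have "mdeg b = 0" "\<exists>l. 0 < b l" unfolding grlex_less_def m0 by auto
  thus False using le_mdeg[of b] by (metis le_zero_eq less_irrefl)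
qed

lemma main_bound:
  fixes K :: "(complex^'n::{finite,linorder}) set" and i :: nat
  assumes K: "compact K" "K \<noteq> {}" and P: "P \<in> monic_class i"
  shows "tau_minus K ^ mdeg (mindex i :: 'n \<Rightarrow> nat) \<le> ereal (supnorm K P) \<and> 0 \<le> tau_minus K"
proof -
  define a :: "'n \<Rightarrow> nat" where "a = mindex i"
  define d where "d = mdeg a"
  define s where "s = supnorm K P"
  define f where "f = (\<lambda>i. ereal (cheb_const K i powr (1 / real (mdeg (mindex i :: 'n \<Rightarrow> nat)))))"
  have tau: "tau_minus K = liminf f" unfolding tau_minus_def f_def by simp
  have cP: "continuous_on UNIV P" using class_cont P by blast
  have s0: "0 \<le> s" unfolding s_def using sn_nonneg[OF cP K] .
  have PM: "P \<in> Mc a" unfolding a_def using class_Mc P by blast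
  have tau0: "0 \<le> tau_minus K" unfolding tau by (rule Liminf_bounded) (simp add: f_def)
  show ?thesis
  proof (cases "d = 0")
    case True
    hence a0: "a = (\<lambda>_. 0)" unfolding d_def using le_mdeg[of a] by (auto simp: fun_eq_iff)
    from PM obtain q where q: "q \<in> Lc a" "P = (\<lambda>z. monomial a z + q z)" unfolding Mc_def by auto
    from q(1) obtain c where "q = (\<lambda>z. \<Sum>b\<in>pred a. c b * monomial b z)" unfolding Lc_def by auto
    moreover have "pred a = {}" using pred_zero a0 by auto
    ultimately have "q = (\<lambda>z. 0)" by simp
    hence "P = (\<lambda>z. 1)" using q(2) a0 by (simp add: monomial_def)
    hence "s = 1" unfolding s_def supnorm_def using K(2) by simp
    thus ?thesis using True tau0 unfolding d_def a_def s_def by simp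
  next
    case False
    hence d1: "d \<ge> 1" by simp
    define r where "r = (\<lambda>m. rk (\<lambda>k. Suc m * a k))"
    have mr: "mindex (r m) = (\<lambda>k. Suc m * a k)" for m unfolding r_def by (rule mindex_rk)
    have mdr: "mdeg (mindex (r m) :: 'n \<Rightarrow> nat) = Suc m * d" for m
      unfolding mr d_def by (rule mdeg_mult)
    have "strict_mono r"
    proof (rule strict_monoI_Suc)
      fix m
      have "Suc m * d < Suc (Suc m) * d" using d1 by simp
      hence "grlex_less (\<lambda>k. Suc m * a k) (\<lambda>k. Suc (Suc m) * a k)"
        unfolding grlex_less_def mdeg_mult d_def by simp
      thus "r m < r (Suc m)" unfolding r_def by (rule rk_mono)
    qed
    have fr: "f (r m) \<le> ereal (s powr (1 / real d))" for m
    proof -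
      have "(\<lambda>z. P z ^ Suc m) \<in> Mc (\<lambda>k. Suc m * a k)" using Mc_power[OF PM] .
      hence "(\<lambda>z. P z ^ Suc m) \<in> monic_class (r m)" unfolding r_def by (rule Mc_class)
      hence "cheb_const K (r m) \<le> supnorm K (\<lambda>z. P z ^ Suc m)" by (rule cheb_le[OF K])
      also have "\<dots> \<le> s ^ Suc m" unfolding s_def by (rule sn_power[OF cP K])
      finally have le: "cheb_const K (r m) \<le> s ^ Suc m" .
      have "cheb_const K (r m) powr (1 / real (Suc m * d)) \<le> (s ^ Suc m) powr (1 / real (Suc m * d))"
        by (rule powr_mono2) (use le cheb_nonneg[OF K] in auto)
      also have "\<dots> = s powr (1 / real d)"
      proof (cases "s = 0")
        case True thus ?thesis by simp
      next
        case False
        hence "s > 0" using s0 by simp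
        hence "(s ^ Suc m) powr (1 / real (Suc m * d)) = (s powr real (Suc m)) powr (1 / real (Suc m * d))"
          by (simp only: powr_realpow)
        also have "\<dots> = s powr (real (Suc m) * (1 / real (Suc m * d)))" by (simp add: powr_powr)
        also have "real (Suc m) * (1 / real (Suc m * d)) = 1 / real d"
        proof -
          have "Suc m * d > 0" using d1 by simp
          hence "real (Suc m * d) > 0" by (simp only: of_nat_0_less_iff)
          moreover have "real d > 0" using d1 by simp
          ultimately show ?thesis by (simp add: field_simps)
        qed
        finally show ?thesis .
      qed
      finally show ?thesis unfolding f_def mdr by simp
    qed
    have "tau_minus K \<le> liminf (f \<circ> r)" unfolding tau by (rule liminf_subseq_mono) fact
    also have "\<dots> \<le> ereal (s powr (1 / real d))"
      by (rule Liminf_le) (auto simp: fr)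
    finally have tle: "tau_minus K \<le> ereal (s powr (1 / real d))" .
    obtain t where t: "tau_minus K = ereal t" "0 \<le> t" "t \<le> s powr (1 / real d)"
      using tle tau0 by (cases "tau_minus K") auto
    have "t ^ d \<le> (s powr (1 / real d)) ^ d" using t by (intro power_mono) auto
    also have "\<dots> = s"
    proof (cases "s = 0")
      case True thus ?thesis using d1 by simp
    next
      case False
      hence "s > 0" using s0 by simp
      hence "(s powr (1 / real d)) ^ d = (s powr (1 / real d)) powr real d"
        using powr_realpow[of "s powr (1 / real d)" d] by simp
      also have "\<dots> = s" using d1 s0 by (simp add: powr_powr)
      finally show ?thesis .
    qed
    finally show ?thesis using t tau0 unfolding d_def a_def s_def by simp
  qed
qed

theorem theorem2p1:
  fixes K :: "(complex^'n::{finite,linorder}) set" and i :: nat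
  assumes "compact K" and "\<not> pluripolar K"
  shows "ereal (cheb_const K i) \<ge> tau_minus K ^ mdeg (mindex i :: 'n \<Rightarrow> nat)
     \<and> (\<forall>T\<in>monic_class i. (\<forall>P\<in>monic_class i. supnorm K T \<le> supnorm K P) \<longrightarrow>
          ereal (supnorm K T) \<ge> tau_minus K ^ mdeg (mindex i :: 'n \<Rightarrow> nat))"
proof -
  have K: "compact K" "K \<noteq> {}" using assms empty_pluripolar by auto
  let ?t = "tau_minus K ^ mdeg (mindex i :: 'n \<Rightarrow> nat)"
  have b: "?t \<le> ereal (supnorm K P)" if "P \<in> monic_class i" for P
    using main_bound[OF K that] by blast
  have t0: "0 \<le> tau_minus K" using main_bound[OF K class_nonempty] by blast
  have "?t \<le> ereal (supnorm K (\<lambda>z. monomial (mindex i) z))" using b class_nonempty by blast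
  moreover have "0 \<le> ?t" using t0 by simp
  ultimately obtain x where x: "?t = ereal x" by (cases ?t) auto
  have "x \<le> cheb_const K i" unfolding cheb_const_def
  proof (rule cInf_greatest)
    show "supnorm K ` monic_class i \<noteq> {}" using class_nonempty by blast
    fix y assume "y \<in> supnorm K ` monic_class i"
    then obtain p where "p \<in> monic_class i" "y = supnorm K p" by auto
    thus "x \<le> y" using b x by fastforce
  qed
  thus ?thesis using b x by simp
qed

end
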